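(* Let $n\ge 1$, let $z_1,\dots,z_n\in\mathbb{C}$ be pairwise distinct, let $k_1,\dots,k_n\ge 0$ be integers, let $\beta_1,\dots,\beta_n\in\mathbb{C}$ and $\alpha_i^{(j)}\in\mathbb{C}$ ($j=1,\dots,n$, $i=1,\dots,k_j$), and set $m=\sum_{j=1}^n (k_j+1)$. For each $j$ let $J_{j,k_j}\in\mathbb{C}^{(k_j+1)\times(k_j+1)}$ be the upper bidiagonal matrix with diagonal entries $z_j$ and superdiagonal entries, from top to bottom, $\alpha_{k_j}^{(j)},\dots,\alpha_1^{(j)}$. Let $Z=J_{1,k_1}\oplus\cdots\oplus J_{n,k_n}\in\mathbb{C}^{m\times m}$ (block diagonal) and $w=\begin{bmatrix}\beta_1 e_{k_1+1}^\top & \cdots & \beta_n e_{k_n+1}^\top\end{bmatrix}^\top\in\mathbb{C}^m$, where $e_{k_j+1}=(0,\dots,0,1)^\top\in\mathbb{R}^{k_j+1}$. Let $k,\ell\le m$, let $x\in\mathcal{K}_k(Z,w)$ and $y\in\mathcal{K}_\ell(Z,w)$, and let $p\in\mathcal{P}_k$ and $q\in\mathcal{P}_\ell$ be polynomials with $p(Z)w=x$ and $q(Z)w=y$. Then $$y^H x = \sum_{j=1}^n |\beta_j|^2\left(\sum_{r=0}^{k_j}\left|\frac{\prod_{i=1}^{r}\alpha_i^{(j)}}{r!}\right|^2 \overline{q^{(r)}(z_j)}\, p^{(r)}(z_j)\right).$$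
   Context: $\mathcal{P}_k$ denotes the space of polynomials with complex coefficients of degree at most $k$. For $A\in\mathbb{C}^{m\times m}$ and $v\in\mathbb{C}^m$, the Krylov subspace is $\mathcal{K}_k(A,v)=\mathrm{span}\{v,Av,\dots,A^{k-1}v\}$. $y^H$ denotes the conjugate transpose of $y$. An empty product equals $1$. *)

theory Defs
  imports "Jordan_Normal_Form.Matrix" "HOL-Computational_Algebra.Polynomial"
begin

definition jblock :: "complex \<Rightarrow> (nat \<Rightarrow> complex) \<Rightarrow> nat \<Rightarrow> complex mat" where
  "jblock z a k = mat (k+1) (k+1)
     (\<lambda>(r,c). if r = c then z else if c = r + 1 then a (k - r) else 0)"

definition Zmat :: "nat \<Rightarrow> (nat \<Rightarrow> complex) \<Rightarrow> (nat \<Rightarrow> nat) \<Rightarrow> (nat \<Rightarrow> nat \<Rightarrow> complex) \<Rightarrow> complex mat" where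
  "Zmat n z k alpha = diag_block_mat (map (\<lambda>j. jblock (z j) (alpha j) (k j)) [0..<n])"

definition wvec :: "nat \<Rightarrow> (nat \<Rightarrow> nat) \<Rightarrow> (nat \<Rightarrow> complex) \<Rightarrow> complex vec" where
  "wvec n k beta = foldr (\<lambda>v acc. v @\<^sub>v acc)
     (map (\<lambda>j. vec (k j + 1) (\<lambda>i. if i = k j then beta j else 0)) [0..<n]) (vec 0 (\<lambda>_. 0))"

definition poly_mat_vec :: "complex poly \<Rightarrow> complex mat \<Rightarrow> complex vec \<Rightarrow> complex vec" where
  "poly_mat_vec p A v = vec (dim_vec v)
     (\<lambda>r. \<Sum>i\<le>degree p. coeff p i * ((A ^\<^sub>m i) *\<^sub>v v) $ r)"

definition krylov :: "complex mat \<Rightarrow> complex vec \<Rightarrow> nat \<Rightarrow> complex vec set" where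
  "krylov A v k = {x. \<exists>c :: nat \<Rightarrow> complex.
      x = vec (dim_vec v) (\<lambda>r. \<Sum>i<k. c i * ((A ^\<^sub>m i) *\<^sub>v v) $ r)}"

end

theory Submission
  imports Defs
begin


definition vcat :: "'a::zero vec list \<Rightarrow> 'a vec" where
  "vcat vs = foldr (\<lambda>v acc. v @\<^sub>v acc) vs (vec 0 (\<lambda>_. 0))"

lemma vcat_Nil[simp]: "vcat [] = vec 0 (\<lambda>_. 0)" by (simp add: vcat_def)
lemma vcat_Cons[simp]: "vcat (v # vs) = v @\<^sub>v vcat vs" by (simp add: vcat_def)

lemma vcat_carrier:
  assumes "\<And>j. j \<in> set js \<Longrightarrow> v j \<in> carrier_vec (d j)"
  shows "vcat (map v js) \<in> carrier_vec (\<Sum>j\<leftarrow>js. d j)"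
  using assms
proof (induction js)
  case Nil
  show ?case by simp
next
  case (Cons j js)
  have "v j \<in> carrier_vec (d j)" using Cons.prems by simp
  moreover have "vcat (map v js) \<in> carrier_vec (\<Sum>j\<leftarrow>js. d j)" using Cons by simp
  ultimately show ?case by simp
qed

lemma diag_carrier:
  assumes "\<And>j. j \<in> set js \<Longrightarrow> A j \<in> carrier_mat (d j) (d j)"
  shows "diag_block_mat (map A js) \<in> carrier_mat (\<Sum>j\<leftarrow>js. d j) (\<Sum>j\<leftarrow>js. d j)"
  using assms
proof (induction js)
  case Nil
  show ?case by simp
next
  case (Cons j js)
  have Aj: "A j \<in> carrier_mat (d j) (d j)" using Cons.prems by simp
  have D: "diag_block_mat (map A js) \<in> carrier_mat (\<Sum>j\<leftarrow>js. d j) (\<Sum>j\<leftarrow>js. d j)" using Cons by simp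
  have "diag_block_mat (map A (j # js)) = four_block_mat (A j) (0\<^sub>m (d j) (\<Sum>j\<leftarrow>js. d j))
     (0\<^sub>m (\<Sum>j\<leftarrow>js. d j) (d j)) (diag_block_mat (map A js))"
    using Aj D by (simp only: list.map diag_block_mat.simps Let_def carrier_matD)
  then show ?case using four_block_carrier_mat[OF Aj D] by simp
qed

lemma diag_mult_vcat:
  assumes "\<And>j. j \<in> set js \<Longrightarrow> A j \<in> carrier_mat (d j) (d j)"
    and "\<And>j. j \<in> set js \<Longrightarrow> v j \<in> carrier_vec (d j)"
  shows "diag_block_mat (map A js) *\<^sub>v vcat (map v js) = vcat (map (\<lambda>j. A j *\<^sub>v v j) js)"
  using assms
proof (induction js)
  case Nil
  then show ?case by (auto intro!: eq_vecI)
next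
  case (Cons j js)
  have D: "diag_block_mat (map A js) \<in> carrier_mat (\<Sum>j\<leftarrow>js. d j) (\<Sum>j\<leftarrow>js. d j)"
    using Cons.prems by (intro diag_carrier) auto
  have Aj: "A j \<in> carrier_mat (d j) (d j)" and vj: "v j \<in> carrier_vec (d j)" using Cons.prems by auto
  have vc: "vcat (map v js) \<in> carrier_vec (\<Sum>j\<leftarrow>js. d j)"
    using Cons.prems by (intro vcat_carrier) auto
  have e: "diag_block_mat (A j # map A js) = four_block_mat (A j) (0\<^sub>m (d j) (\<Sum>j\<leftarrow>js. d j))
     (0\<^sub>m (\<Sum>j\<leftarrow>js. d j) (d j)) (diag_block_mat (map A js))"
    using Aj D by (simp only: diag_block_mat.simps Let_def carrier_matD)
  have IH: "diag_block_mat (map A js) *\<^sub>v vcat (map v js) = vcat (map (\<lambda>j. A j *\<^sub>v v j) js)"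
    using Cons by simp
  show ?case unfolding list.map vcat_Cons e mult_mat_vec_split[OF Aj D vj vc] IH ..
qed

lemma lincomb_vcat:
  assumes "\<And>j i. j \<in> set js \<Longrightarrow> u j i \<in> carrier_vec (d j)"
  shows "vec (\<Sum>j\<leftarrow>js. d j) (\<lambda>r. \<Sum>i\<in>I. c i * vcat (map (\<lambda>j. u j i) js) $ r)
       = vcat (map (\<lambda>j. vec (d j) (\<lambda>r. \<Sum>i\<in>I. c i * u j i $ r)) js)"
  using assms
proof (induction js)
  case Nil
  then show ?case by (intro eq_vecI) simp_all
next
  case (Cons j js)
  define R where "R = vcat (map (\<lambda>j. vec (d j) (\<lambda>r. \<Sum>i\<in>I. c i * u j i $ r)) js)"
  have vc: "\<And>i. vcat (map (\<lambda>j. u j i) js) \<in> carrier_vec (\<Sum>j\<leftarrow>js. d j)"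
    using Cons.prems by (intro vcat_carrier) auto
  have uj: "\<And>i. u j i \<in> carrier_vec (d j)" using Cons.prems by auto
  have IH: "vec (\<Sum>j\<leftarrow>js. d j) (\<lambda>r. \<Sum>i\<in>I. c i * vcat (map (\<lambda>j. u j i) js) $ r) = R"
    using Cons unfolding R_def by auto
  have dR: "dim_vec R = (\<Sum>j\<leftarrow>js. d j)" using IH[symmetric] by simp
  have dvc: "\<And>i. dim_vec (vcat (map (\<lambda>j. u j i) js)) = (\<Sum>j\<leftarrow>js. d j)" using vc by simp
  have duj: "\<And>i. dim_vec (u j i) = d j" using uj by simp
  have RHS: "vcat (map (\<lambda>j. vec (d j) (\<lambda>r. \<Sum>i\<in>I. c i * u j i $ r)) (j # js))
     = vec (d j) (\<lambda>r. \<Sum>i\<in>I. c i * u j i $ r) @\<^sub>v R" unfolding R_def by simp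
  show ?case unfolding RHS
  proof (rule eq_vecI)
    fix r assume r: "r < dim_vec (vec (d j) (\<lambda>r. \<Sum>i\<in>I. c i * u j i $ r) @\<^sub>v R)"
    then have r': "r < d j + (\<Sum>j\<leftarrow>js. d j)" using dR by simp
    show "vec (\<Sum>j\<leftarrow>j # js. d j) (\<lambda>r. \<Sum>i\<in>I. c i * vcat (map (\<lambda>j. u j i) (j # js)) $ r) $ r =
         (vec (d j) (\<lambda>r. \<Sum>i\<in>I. c i * u j i $ r) @\<^sub>v R) $ r"
    proof (cases "r < d j")
      case True
      then show ?thesis using r' duj dvc dR by simp
    next
      case False
      have "R $ (r - d j)
        = vec (\<Sum>j\<leftarrow>js. d j) (\<lambda>r. \<Sum>i\<in>I. c i * vcat (map (\<lambda>j. u j i) js) $ r) $ (r - d j)"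
        using IH by simp
      also have "\<dots> = (\<Sum>i\<in>I. c i * vcat (map (\<lambda>j. u j i) js) $ (r - d j))"
        using False r' by simp
      finally show ?thesis using r' duj dvc dR False by simp
    qed
  next
    show "dim_vec (vec (\<Sum>j\<leftarrow>j # js. d j) (\<lambda>r. \<Sum>i\<in>I. c i * vcat (map (\<lambda>j. u j i) (j # js)) $ r)) =
          dim_vec (vec (d j) (\<lambda>r. \<Sum>i\<in>I. c i * u j i $ r) @\<^sub>v R)" using dR by simp
  qed
qed

lemma sum_split_nat: "(\<Sum>r<(a::nat)+b. f r) = (\<Sum>r<a. f r) + (\<Sum>r<b. f (a + r))"
  by (induction b) (simp_all add: add.assoc)

lemma inner_vcat:
  assumes "\<And>j. j \<in> set js \<Longrightarrow> X j \<in> carrier_vec (d j)"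
    and "\<And>j. j \<in> set js \<Longrightarrow> Y j \<in> carrier_vec (d j)"
  shows "(\<Sum>r<(\<Sum>j\<leftarrow>js. d j). cnj (vcat (map Y js) $ r) * vcat (map X js) $ r)
       = (\<Sum>j\<leftarrow>js. \<Sum>r<d j. cnj (Y j $ r) * X j $ r)"
  using assms
proof (induction js)
  case Nil
  then show ?case by simp
next
  case (Cons j js)
  have vx: "dim_vec (vcat (map X js)) = (\<Sum>j\<leftarrow>js. d j)"
    using Cons.prems vcat_carrier[of js X d] by simp
  have vy: "dim_vec (vcat (map Y js)) = (\<Sum>j\<leftarrow>js. d j)"
    using Cons.prems vcat_carrier[of js Y d] by simp
  have xj: "dim_vec (X j) = d j" "dim_vec (Y j) = d j" using Cons.prems by auto
  have IH: "(\<Sum>r<(\<Sum>j\<leftarrow>js. d j). cnj (vcat (map Y js) $ r) * vcat (map X js) $ r)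
       = (\<Sum>j\<leftarrow>js. \<Sum>r<d j. cnj (Y j $ r) * X j $ r)" using Cons by simp
  have a: "(\<Sum>r<d j. cnj ((Y j @\<^sub>v vcat (map Y js)) $ r) * (X j @\<^sub>v vcat (map X js)) $ r)
     = (\<Sum>r<d j. cnj (Y j $ r) * X j $ r)"
    by (rule sum.cong) (use xj vx vy in auto)
  have b: "(\<Sum>r<(\<Sum>j\<leftarrow>js. d j). cnj ((Y j @\<^sub>v vcat (map Y js)) $ (d j + r)) * (X j @\<^sub>v vcat (map X js)) $ (d j + r))
     = (\<Sum>r<(\<Sum>j\<leftarrow>js. d j). cnj (vcat (map Y js) $ r) * vcat (map X js) $ r)"
    by (rule sum.cong) (use xj vx vy in auto)
  show ?case
    unfolding list.map sum_list.Cons vcat_Cons sum_split_nat a b IH ..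
qed

lemma pow_mat_Suc_left:
  assumes "A \<in> carrier_mat n n"
  shows "A ^\<^sub>m Suc i = A * A ^\<^sub>m i"
proof (induction i)
  case 0
  then show ?case using assms by simp
next
  case (Suc i)
  have "A ^\<^sub>m Suc (Suc i) = A ^\<^sub>m Suc i * A" by simp
  also have "\<dots> = (A * A ^\<^sub>m i) * A" using Suc by simp
  also have "\<dots> = A * (A ^\<^sub>m i * A)"
    by (rule assoc_mult_mat[of _ n n _ n _ n]) (use assms in auto)
  finally show ?case by simp
qed

lemma jblock_carrier: "jblock z a K \<in> carrier_mat (K+1) (K+1)"
  by (simp add: jblock_def)

definition uvec :: "complex \<Rightarrow> (nat \<Rightarrow> complex) \<Rightarrow> nat \<Rightarrow> complex \<Rightarrow> nat \<Rightarrow> nat \<Rightarrow> complex" where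
  "uvec z a K b i r = b * of_nat (i choose (K - r)) * z ^ (i - (K - r)) * (\<Prod>t=1..K-r. a t)"

lemma jblock_row_sum:
  fixes z :: complex and f :: "nat \<Rightarrow> complex"
  assumes r: "r < K + 1"
  shows "(\<Sum>c<K+1. (if r = c then z else if c = r + 1 then a (K - r) else 0) * f c)
     = z * f r + (if r < K then a (K - r) * f (r + 1) else 0)"
proof -
  have "(\<Sum>c<K+1. (if r = c then z else if c = r + 1 then a (K - r) else 0) * f c)
     = (\<Sum>c<K+1. (if c = r then z * f c else 0) + (if c = r + 1 then a (K - r) * f c else 0))"
    by (rule sum.cong) auto
  also have "\<dots> = (\<Sum>c<K+1. (if c = r then z * f c else 0)) + (\<Sum>c<K+1. (if c = r + 1 then a (K - r) * f c else 0))"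
    by (rule sum.distrib)
  also have "\<dots> = z * f r + (if r < K then a (K - r) * f (r + 1) else 0)"
    using r by (simp add: sum.delta' lessThan_def)
  finally show ?thesis .
qed

lemma jblock_mult:
  assumes "dim_vec v = K + 1" "r < K + 1"
  shows "(jblock z a K *\<^sub>v v) $ r = z * v $ r + (if r < K then a (K - r) * v $ (r + 1) else 0)"
proof -
  have "(jblock z a K *\<^sub>v v) $ r = row (jblock z a K) r \<bullet> v"
    using assms by (simp add: jblock_def)
  also have "\<dots> = (\<Sum>c<K+1. (if r = c then z else if c = r + 1 then a (K - r) else 0) * v $ c)"
    using assms by (simp add: jblock_def scalar_prod_def row_def atLeast0LessThan mult.commute)
  also have "\<dots> = z * v $ r + (if r < K then a (K - r) * v $ (r + 1) else 0)"
    by (rule jblock_row_sum[OF assms(2)])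
  finally show ?thesis .
qed

lemma uvec_step:
  assumes r: "r < K + 1"
  shows "uvec z a K b (Suc i) r = z * uvec z a K b i r + (if r < K then a (K - r) * uvec z a K b i (r + 1) else 0)"
proof (cases "r < K")
  case False
  then have "r = K" using r by simp
  then show ?thesis by (simp add: uvec_def)
next
  case True
  define t where "t = K - (r + 1)"
  have s: "K - r = Suc t" and s1: "K - (r+1) = t" using True unfolding t_def by auto
  have P: "(\<Prod>t=1..Suc t. a t) = (\<Prod>t=1..t. a t) * a (Suc t)"
    by (simp add: prod.cl_ivl_Suc)
  show ?thesis
  proof (cases "t < i")
    case True
    have z1: "z ^ (i - t) = z * z ^ (i - Suc t)" using True
      by (metis Suc_diff_Suc power_Suc)
    show ?thesis unfolding uvec_def s s1 P using \<open>r < K\<close>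
      by (simp add: z1 algebra_simps)
  next
    case False
    have c0: "i choose Suc t = 0" using False by simp
    have e1: "i - t = 0" "Suc i - Suc t = 0" using False by auto
    show ?thesis unfolding uvec_def s s1 P using \<open>r < K\<close>
      by (simp add: c0 e1 algebra_simps)
  qed
qed

lemma jblock_pow_e:
  "(jblock z a K ^\<^sub>m i) *\<^sub>v vec (K+1) (\<lambda>j. if j = K then b else 0) = vec (K+1) (uvec z a K b i)"
proof (induction i)
  case 0
  show ?case
    by (rule eq_vecI) (auto simp: jblock_def uvec_def)
next
  case (Suc i)
  have J: "jblock z a K \<in> carrier_mat (K+1) (K+1)" by (rule jblock_carrier)
  have "(jblock z a K ^\<^sub>m Suc i) *\<^sub>v vec (K+1) (\<lambda>j. if j = K then b else 0)
     = jblock z a K *\<^sub>v ((jblock z a K ^\<^sub>m i) *\<^sub>v vec (K+1) (\<lambda>j. if j = K then b else 0))"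
    unfolding pow_mat_Suc_left[OF J] by (rule assoc_mult_mat_vec[of _ "K+1" "K+1" _ "K+1"]) (use J in auto)
  also have "\<dots> = jblock z a K *\<^sub>v vec (K+1) (uvec z a K b i)" using Suc by simp
  also have "\<dots> = vec (K+1) (uvec z a K b (Suc i))"
  proof (rule eq_vecI)
    fix r assume "r < dim_vec (vec (K+1) (uvec z a K b (Suc i)))"
    then have r: "r < K + 1" by simp
    show "(jblock z a K *\<^sub>v vec (K+1) (uvec z a K b i)) $ r = vec (K+1) (uvec z a K b (Suc i)) $ r"
      using jblock_mult[of "vec (K+1) (uvec z a K b i)" K r z a] r uvec_step[OF r] by simp
  qed (simp add: jblock_def)
  finally show ?case .
qed

lemma poch_choose:
  assumes "s \<le> i"
  shows "pochhammer (of_nat (Suc (i - s)) :: complex) s = of_nat (fact s * (i choose s))"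
proof -
  have "(fact i :: complex) = pochhammer 1 ((i - s) + s)" using assms by (simp add: pochhammer_fact)
  also have "\<dots> = pochhammer 1 (i - s) * pochhammer (1 + of_nat (i - s)) s"
    by (rule pochhammer_product')
  also have "\<dots> = fact (i - s) * pochhammer (of_nat (Suc (i - s))) s"
    by (simp add: pochhammer_fact add.commute)
  finally have 1: "(fact i :: complex) = fact (i - s) * pochhammer (of_nat (Suc (i - s))) s" .
  have "(fact i :: complex) = of_nat (fact s * fact (i - s) * (i choose s))"
    using binomial_fact_lemma[OF assms] by (metis of_nat_fact)
  then have 2: "(fact i :: complex) = fact (i - s) * of_nat (fact s * (i choose s))"
    by (simp add: of_nat_mult algebra_simps)
  have "(fact (i - s) :: complex) \<noteq> 0" by simp
  then show ?thesis using 1 2 by (metis mult_left_cancel)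
qed

lemma higher_pderiv_monom':
  "(pderiv ^^ s) (monom (c::complex) i) =
     (if s \<le> i then monom (of_nat (fact s * (i choose s)) * c) (i - s) else 0)"
proof (rule poly_eqI)
  fix n
  show "coeff ((pderiv ^^ s) (monom c i)) n =
     coeff (if s \<le> i then monom (of_nat (fact s * (i choose s)) * c) (i - s) else 0) n"
  proof (cases "s \<le> i \<and> n = i - s")
    case True
    then show ?thesis using poch_choose[of s i] by (simp add: coeff_higher_pderiv coeff_monom)
  next
    case False
    then have "n + s \<noteq> i" by auto
    then show ?thesis using False by (auto simp: coeff_higher_pderiv coeff_monom)
  qed
qed

lemma poly_higher_pderiv_sum:
  "poly ((pderiv ^^ s) p) (z::complex) =
     fact s * (\<Sum>i\<le>degree p. coeff p i * of_nat (i choose s) * z ^ (i - s))"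
proof -
  have "poly ((pderiv ^^ s) p) z = poly ((pderiv ^^ s) (\<Sum>i\<le>degree p. monom (coeff p i) i)) z"
    by (simp add: poly_as_sum_of_monoms)
  also have "\<dots> = (\<Sum>i\<le>degree p. poly ((pderiv ^^ s) (monom (coeff p i) i)) z)"
    by (simp add: higher_pderiv_sum poly_sum)
  also have "\<dots> = (\<Sum>i\<le>degree p. fact s * (coeff p i * of_nat (i choose s) * z ^ (i - s)))"
    by (rule sum.cong) (auto simp: higher_pderiv_monom' poly_monom)
  also have "\<dots> = fact s * (\<Sum>i\<le>degree p. coeff p i * of_nat (i choose s) * z ^ (i - s))"
    by (simp add: sum_distrib_left)
  finally show ?thesis .
qed

lemma blockX:
  "vec (K+1) (\<lambda>r. \<Sum>i\<le>degree p. coeff p i * ((jblock z a K ^\<^sub>m i) *\<^sub>v vec (K+1) (\<lambda>j. if j = K then b else 0)) $ r)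
   = vec (K+1) (\<lambda>r. b * ((\<Prod>t=1..K-r. a t) / fact (K - r)) * poly ((pderiv ^^ (K - r)) p) z)"
proof (rule eq_vecI)
  fix r assume "r < dim_vec (vec (K+1) (\<lambda>r. b * ((\<Prod>t=1..K-r. a t) / fact (K - r)) * poly ((pderiv ^^ (K - r)) p) z))"
  then have r: "r < K + 1" by simp
  have "(\<Sum>i\<le>degree p. coeff p i * ((jblock z a K ^\<^sub>m i) *\<^sub>v vec (K+1) (\<lambda>j. if j = K then b else 0)) $ r)
     = (\<Sum>i\<le>degree p. coeff p i * uvec z a K b i r)"
    unfolding jblock_pow_e using r by simp
  also have "\<dots> = b * (\<Prod>t=1..K-r. a t) * (\<Sum>i\<le>degree p. coeff p i * of_nat (i choose (K - r)) * z ^ (i - (K - r)))"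
    by (simp add: uvec_def sum_distrib_left algebra_simps)
  also have "\<dots> = b * ((\<Prod>t=1..K-r. a t) / fact (K - r)) * poly ((pderiv ^^ (K - r)) p) z"
    by (simp add: poly_higher_pderiv_sum)
  finally show "vec (K+1) (\<lambda>r. \<Sum>i\<le>degree p. coeff p i * ((jblock z a K ^\<^sub>m i) *\<^sub>v vec (K+1) (\<lambda>j. if j = K then b else 0)) $ r) $ r
     = vec (K+1) (\<lambda>r. b * ((\<Prod>t=1..K-r. a t) / fact (K - r)) * poly ((pderiv ^^ (K - r)) p) z) $ r"
    using r by simp
qed simp

theorem theorem1:
  fixes n m kk ll :: nat
    and z beta :: "nat \<Rightarrow> complex"
    and k :: "nat \<Rightarrow> nat"
    and alpha :: "nat \<Rightarrow> nat \<Rightarrow> complex"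
    and x y :: "complex vec"
    and p q :: "complex poly"
  assumes "n \<ge> 1"
    and "inj_on z {..<n}"
    and "m = (\<Sum>j<n. k j + 1)"
    and "kk \<le> m" and "ll \<le> m"
    and "x \<in> krylov (Zmat n z k alpha) (wvec n k beta) kk"
    and "y \<in> krylov (Zmat n z k alpha) (wvec n k beta) ll"
    and "degree p \<le> kk" and "degree q \<le> ll"
    and "poly_mat_vec p (Zmat n z k alpha) (wvec n k beta) = x"
    and "poly_mat_vec q (Zmat n z k alpha) (wvec n k beta) = y"
  shows "(\<Sum>i<m. cnj (y $ i) * x $ i) =
    (\<Sum>j<n. complex_of_real ((cmod (beta j))\<^sup>2) *
       (\<Sum>r\<le>k j. complex_of_real ((cmod ((\<Prod>i=1..r. alpha j i) / fact r))\<^sup>2)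
          * cnj (poly ((pderiv ^^ r) q) (z j)) * poly ((pderiv ^^ r) p) (z j)))"
proof -
  define js where "js = [0..<n]"
  define B where "B j = jblock (z j) (alpha j) (k j)" for j
  define W where "W j = vec (k j + 1) (\<lambda>i. if i = k j then beta j else 0)" for j
  define d where "d j = k j + 1" for j
  define Z where "Z = Zmat n z k alpha"
  define w where "w = wvec n k beta"
  have Bc: "\<And>j. B j \<in> carrier_mat (d j) (d j)" unfolding B_def d_def by (rule jblock_carrier)
  have Wc: "\<And>j. W j \<in> carrier_vec (d j)" unfolding W_def d_def by simp
  have sd: "(\<Sum>j\<leftarrow>js. d j) = m"
    unfolding js_def d_def assms(3) by (simp add: sum_set_upt_conv_sum_list_nat[symmetric] atLeast0LessThan)
  have Zd: "Z = diag_block_mat (map B js)" unfolding Z_def Zmat_def B_def js_def ..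
  have wd: "w = vcat (map W js)" unfolding w_def wvec_def vcat_def W_def js_def ..
  have dw: "dim_vec w = m" using vcat_carrier[of js W d] Wc sd wd by simp
  have sq: "Ball (set (map B js)) square_mat"
  proof
    fix A assume "A \<in> set (map B js)"
    then obtain j where "A = B j" by auto
    then show "square_mat A" using carrier_matD[OF Bc[of j]] by (simp add: square_mat.simps)
  qed
  have Bpc: "\<And>j i. B j ^\<^sub>m i \<in> carrier_mat (d j) (d j)" using Bc by (rule pow_carrier_mat)
  have Zpow: "\<And>i. Z ^\<^sub>m i *\<^sub>v w = vcat (map (\<lambda>j. B j ^\<^sub>m i *\<^sub>v W j) js)"
  proof -
    fix i
    have "Z ^\<^sub>m i = diag_block_mat (map (\<lambda>A. A ^\<^sub>m i) (map B js))"
      unfolding Zd by (rule diag_block_pow_mat[OF sq])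
    also have "\<dots> = diag_block_mat (map (\<lambda>j. B j ^\<^sub>m i) js)" by (simp add: o_def)
    finally have "Z ^\<^sub>m i *\<^sub>v w = diag_block_mat (map (\<lambda>j. B j ^\<^sub>m i) js) *\<^sub>v vcat (map W js)"
      using wd by simp
    also have "\<dots> = vcat (map (\<lambda>j. B j ^\<^sub>m i *\<^sub>v W j) js)"
      by (rule diag_mult_vcat[where d=d]) (use Bc Wc in auto)
    finally show "Z ^\<^sub>m i *\<^sub>v w = vcat (map (\<lambda>j. B j ^\<^sub>m i *\<^sub>v W j) js)" .
  qed
  have uc: "\<And>j i. B j ^\<^sub>m i *\<^sub>v W j \<in> carrier_vec (d j)"
    using Bpc Wc by (rule mult_mat_vec_carrier)
  define Xv where "Xv pp j = vec (d j) (\<lambda>r. beta j * ((\<Prod>t=1..k j - r. alpha j t) / fact (k j - r))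
        * poly ((pderiv ^^ (k j - r)) pp) (z j))" for pp j
  have pmv: "poly_mat_vec pp Z w = vcat (map (Xv pp) js)" for pp
  proof -
    have "poly_mat_vec pp Z w = vec (\<Sum>j\<leftarrow>js. d j)
        (\<lambda>r. \<Sum>i\<le>degree pp. coeff pp i * vcat (map (\<lambda>j. B j ^\<^sub>m i *\<^sub>v W j) js) $ r)"
      unfolding poly_mat_vec_def dw sd Zpow ..
    also have "\<dots> = vcat (map (\<lambda>j. vec (d j) (\<lambda>r. \<Sum>i\<le>degree pp. coeff pp i * (B j ^\<^sub>m i *\<^sub>v W j) $ r)) js)"
      by (rule lincomb_vcat) (use uc in auto)
    also have "\<dots> = vcat (map (Xv pp) js)"
      unfolding Xv_def d_def B_def W_def blockX ..
    finally show ?thesis .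
  qed
  have Xc: "\<And>pp j. Xv pp j \<in> carrier_vec (d j)" unfolding Xv_def by simp
  have xe: "x = vcat (map (Xv p) js)"
    using assms(10) pmv[of p] unfolding Z_def w_def by (rule subst)
  have ye: "y = vcat (map (Xv q) js)"
    using assms(11) pmv[of q] unfolding Z_def w_def by (rule subst)
  have "(\<Sum>i<m. cnj (y $ i) * x $ i) = (\<Sum>r<(\<Sum>j\<leftarrow>js. d j). cnj (vcat (map (Xv q) js) $ r) * vcat (map (Xv p) js) $ r)"
    by (simp only: xe ye sd)
  also have "\<dots> = (\<Sum>j\<leftarrow>js. \<Sum>r<d j. cnj (Xv q j $ r) * Xv p j $ r)"
    by (rule inner_vcat) (use Xc in auto)
  also have "\<dots> = (\<Sum>j<n. \<Sum>r<d j. cnj (Xv q j $ r) * Xv p j $ r)"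
    unfolding js_def by (simp only: sum_set_upt_conv_sum_list_nat[symmetric] set_upt atLeast0LessThan)
  also have "\<dots> = (\<Sum>j<n. complex_of_real ((cmod (beta j))\<^sup>2) *
       (\<Sum>r\<le>k j. complex_of_real ((cmod ((\<Prod>i=1..r. alpha j i) / fact r))\<^sup>2)
          * cnj (poly ((pderiv ^^ r) q) (z j)) * poly ((pderiv ^^ r) p) (z j)))"
  proof (rule sum.cong[OF refl])
    fix j
    define F where "F s = cnj (beta j * ((\<Prod>t=1..s. alpha j t) / fact s) * poly ((pderiv ^^ s) q) (z j))
        * (beta j * ((\<Prod>t=1..s. alpha j t) / fact s) * poly ((pderiv ^^ s) p) (z j))" for s
    have "(\<Sum>r<d j. cnj (Xv q j $ r) * Xv p j $ r) = (\<Sum>r<k j + 1. F (k j + 1 - Suc r))"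
    proof -
      have dj: "d j = k j + 1" by (simp add: d_def)
      show ?thesis unfolding dj
      proof (rule sum.cong[OF refl])
        fix r assume "r \<in> {..<k j + 1}"
        then have r: "r < k j + 1" by simp
        have e: "k j + 1 - Suc r = k j - r" by simp
        show "cnj (Xv q j $ r) * Xv p j $ r = F (k j + 1 - Suc r)"
          unfolding e F_def Xv_def dj using r by simp
      qed
    qed
    also have "\<dots> = (\<Sum>s<k j + 1. F s)" by (rule sum.nat_diff_reindex)
    also have "\<dots> = (\<Sum>s\<le>k j. F s)" by (simp add: lessThan_Suc_atMost)
    also have "\<dots> = complex_of_real ((cmod (beta j))\<^sup>2) *
       (\<Sum>r\<le>k j. complex_of_real ((cmod ((\<Prod>i=1..r. alpha j i) / fact r))\<^sup>2)
          * cnj (poly ((pderiv ^^ r) q) (z j)) * poly ((pderiv ^^ r) p) (z j))"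
      unfolding sum_distrib_left complex_norm_square
      by (rule sum.cong[OF refl]) (simp only: F_def complex_cnj_mult mult_ac)
    finally show "(\<Sum>r<d j. cnj (Xv q j $ r) * Xv p j $ r) = complex_of_real ((cmod (beta j))\<^sup>2) *
       (\<Sum>r\<le>k j. complex_of_real ((cmod ((\<Prod>i=1..r. alpha j i) / fact r))\<^sup>2)
          * cnj (poly ((pderiv ^^ r) q) (z j)) * poly ((pderiv ^^ r) p) (z j))" .
  qed
  finally show ?thesis .
qed

end
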